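(* Let $X$ be a topological space, $Y$ an infinite completely regular space, and $(g,h)$ a stable pair of Hahn on $X$. Then there exists a separately continuous function $f:X\times Y\to\overline{\mathbb R}$ such that $\min_{y\in Y}f(x,y)=g(x)$ and $\max_{y\in Y}f(x,y)=h(x)$ for every $x\in X$ (in particular $\wedge_f=g$ and $\vee_f=h$).
   Context: Completely regular spaces are assumed $T_1$. $\overline{\mathbb R}=[-\infty,+\infty]$. $\wedge_f(x)=\inf_{y\in Y}f(x,y)$, $\vee_f(x)=\sup_{y\in Y}f(x,y)$. A pair $(g,h)$ of functions $X\to\overline{\mathbb R}$ is a stable pair of Hahn if there are continuous $u_n:X\to\overline{\mathbb R}$ with $g(x)=\min_{n\in\mathbb N}u_n(x)$ and $h(x)=\max_{n\in\mathbb N}u_n(x)$ for all $x\in X$ (attained). $f$ is separately continuous if it is continuous in each variable when the other is fixed. *)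

theory Defs
  imports "HOL-Analysis.Analysis"
begin

definition stable_Hahn_pair :: "'a topology \<Rightarrow> ('a \<Rightarrow> ereal) \<Rightarrow> ('a \<Rightarrow> ereal) \<Rightarrow> bool" where
  "stable_Hahn_pair X g h \<longleftrightarrow>
     (\<exists>u :: nat \<Rightarrow> 'a \<Rightarrow> ereal.
        (\<forall>n. continuous_map X euclidean (u n)) \<and>
        (\<forall>x\<in>topspace X. (\<exists>n. u n x = g x) \<and> (\<forall>n. g x \<le> u n x)) \<and>
        (\<forall>x\<in>topspace X. (\<exists>n. u n x = h x) \<and> (\<forall>n. u n x \<le> h x)))"

definition separately_continuous ::
  "'a topology \<Rightarrow> 'b topology \<Rightarrow> ('a \<Rightarrow> 'b \<Rightarrow> ereal) \<Rightarrow> bool" where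
  "separately_continuous X Y f \<longleftrightarrow>
     (\<forall>x\<in>topspace X. continuous_map Y euclidean (\<lambda>y. f x y)) \<and>
     (\<forall>y\<in>topspace Y. continuous_map X euclidean (\<lambda>x. f x y))"

end

theory Submission
  imports Defs
begin

definition Sx :: "real \<Rightarrow> ereal" where
  "Sx t = (if 1 \<le> t then \<infinity> else if t \<le> -1 then -\<infinity> else ereal (t / (1 - \<bar>t\<bar>)))"

lemma sx_aux_mono:
  fixes s t :: real
  assumes "-1 < s" "s \<le> t" "t < 1"
  shows "s / (1 - \<bar>s\<bar>) \<le> t / (1 - \<bar>t\<bar>)"
proof -
  have a: "0 < 1 - \<bar>s\<bar>" "0 < 1 - \<bar>t\<bar>" using assms by auto
  have "s * (1 - \<bar>t\<bar>) \<le> t * (1 - \<bar>s\<bar>)"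
  proof (cases "0 \<le> s"; cases "0 \<le> t")
    assume "\<not> 0 \<le> s" "0 \<le> t"
    then have "0 \<le> t*(1+s)" "(1 - t) * s \<le> 0" using assms by (auto intro!: mult_nonneg_nonneg mult_nonneg_nonpos)
    moreover have "s * (1 - \<bar>t\<bar>) = (1 - t) * s" "t * (1 - \<bar>s\<bar>) = t * (1 + s)"
      using \<open>\<not> 0 \<le> s\<close> \<open>0 \<le> t\<close> by auto
    ultimately show ?thesis by linarith
  qed (use assms in \<open>auto simp: algebra_simps\<close>)
  then show ?thesis using a by (simp add: divide_simps)
qed

lemma Sx_mono:
  assumes st: "s \<le> t" shows "Sx s \<le> Sx t"
proof (cases "1 \<le> t")
  case True then show ?thesis by (simp add: Sx_def)
next
  case F1: False
  show ?thesis
  proof (cases "s \<le> -1")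
    case True then show ?thesis by (simp add: Sx_def)
  next
    case F2: False
    have "\<not> 1 \<le> s" "\<not> t \<le> -1" using F1 F2 st by linarith+
    then show ?thesis using F1 F2 st sx_aux_mono[of s t] by (simp add: Sx_def)
  qed
qed

lemma Sx_surj: "Sx ` {-1..1} = UNIV"
proof -
  have "e \<in> Sx ` {-1..1}" for e
  proof (cases e)
    case (real r)
    define t where "t = r / (1 + \<bar>r\<bar>)"
    have d: "0 < 1 + \<bar>r\<bar>" by simp
    have t1: "\<bar>t\<bar> < 1" unfolding t_def using d by (simp add: abs_div divide_simps)
    have "1 - \<bar>t\<bar> = 1 / (1 + \<bar>r\<bar>)" unfolding t_def using d by (simp add: abs_div divide_simps)
    then have "t / (1 - \<bar>t\<bar>) = r" unfolding t_def using d by simp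
    moreover have "\<not> 1 \<le> t" "\<not> t \<le> -1" using t1 by linarith+
    ultimately have "Sx t = e" using real by (simp add: Sx_def)
    moreover have "t \<in> {-1..1}" using t1 by (simp add: abs_less_iff)
    ultimately show ?thesis by (rule image_eqI[OF sym])
  next
    case PInf
    have "Sx 1 = e" using PInf by (simp add: Sx_def)
    moreover have "(1::real) \<in> {-1..1}" by simp
    ultimately show ?thesis by (rule image_eqI[OF sym])
  next
    case MInf
    have "Sx (-1) = e" using MInf by (simp add: Sx_def)
    moreover have "(-1::real) \<in> {-1..1}" by simp
    ultimately show ?thesis by (rule image_eqI[OF sym])
  qed
  then show ?thesis by blast
qed

lemma Sx_surj2: "Sx ` UNIV = UNIV" using Sx_surj by blast

lemma Sx_cont: "continuous_on UNIV Sx"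
  by (rule continuous_onI_mono) (auto simp: Sx_surj2 Sx_mono)

lemma sx_aux_strict:
  fixes s t :: real
  assumes "-1 < s" "s < t" "t < 1"
  shows "s / (1 - \<bar>s\<bar>) < t / (1 - \<bar>t\<bar>)"
proof -
  have a: "0 < 1 - \<bar>s\<bar>" "0 < 1 - \<bar>t\<bar>" using assms by auto
  have "s * (1 - \<bar>t\<bar>) < t * (1 - \<bar>s\<bar>)"
  proof (cases "0 \<le> s"; cases "0 \<le> t")
    assume "\<not> 0 \<le> s" "0 \<le> t"
    then have "0 \<le> t*(1+s)" "(1 - t) * s < 0" using assms by (auto intro!: mult_nonneg_nonneg mult_pos_neg)
    moreover have "s * (1 - \<bar>t\<bar>) = (1 - t) * s" "t * (1 - \<bar>s\<bar>) = t * (1 + s)"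
      using \<open>\<not> 0 \<le> s\<close> \<open>0 \<le> t\<close> by auto
    ultimately show ?thesis by linarith
  qed (use assms in \<open>auto simp: algebra_simps\<close>)
  then show ?thesis using a by (simp add: divide_simps)
qed

lemma Sx_strict:
  assumes st: "s < t" and s: "-1 \<le> s" and t: "t \<le> 1"
  shows "Sx s < Sx t"
proof (cases "s = -1")
  case True
  have "\<not> t \<le> -1" using st True by linarith
  then show ?thesis using True by (cases "1 \<le> t") (simp_all add: Sx_def)
next
  case F1: False
  have s1: "\<not> s \<le> -1" "\<not> 1 \<le> s" using F1 s st t by linarith+
  show ?thesis
  proof (cases "t = 1")
    case True then show ?thesis using s1 by (simp add: Sx_def)
  next
    case False
    have "\<not> t \<le> -1" "\<not> 1 \<le> t" using False s st t by linarith+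
    then show ?thesis using s1 sx_aux_strict[of s t] s st t by (simp add: Sx_def)
  qed
qed

lemma Sx_inj: "inj_on Sx {-1..1}"
proof (rule inj_onI)
  fix s t assume s: "s \<in> {-1..1::real}" and t: "t \<in> {-1..1::real}" and e: "Sx s = Sx t"
  show "s = t"
  proof (rule ccontr)
    assume "s \<noteq> t"
    then consider "s < t" | "t < s" by linarith
    then show False
    proof cases
      case 1 then show False using e s t Sx_strict[of s t] by simp
    next
      case 2 then show False using e s t Sx_strict[of t s] by simp
    qed
  qed
qed

lemma Tx_exists: "\<exists>Tx. homeomorphism {-1..1::real} (UNIV::ereal set) Sx Tx"
  by (rule homeomorphism_compact) (auto simp: Sx_surj Sx_inj intro: continuous_on_subset[OF Sx_cont])


definition psi :: "real \<Rightarrow> real" where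
  "psi s = max 0 (min (min (2 * s) 2) (8 - 2 * s))"

lemma psi_nonneg: "0 \<le> psi s" by (simp add: psi_def)
lemma psi_zero: "psi 0 = 0" by (simp add: psi_def)
lemma psi_big: "4 \<le> s \<Longrightarrow> psi s = 0" by (simp add: psi_def)
lemma psi_mid: "1 \<le> s \<Longrightarrow> s \<le> 3 \<Longrightarrow> psi s = 2" by (simp add: psi_def)
lemma psi_cont: "continuous_map X euclideanreal f \<Longrightarrow> continuous_map X euclideanreal (\<lambda>x. psi (f x))"
  unfolding psi_def by (intro continuous_intros) auto

lemma max_side:
  fixes U :: "nat \<Rightarrow> 'a \<Rightarrow> real" and H :: "'a \<Rightarrow> real"
  assumes cont: "\<And>n. continuous_map X euclideanreal (U n)"
    and bnd: "\<And>n x. x \<in> topspace X \<Longrightarrow> \<bar>U n x\<bar> \<le> 1"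
    and att: "\<And>x. x \<in> topspace X \<Longrightarrow> \<exists>k. U k x = H x"
    and le: "\<And>n x. x \<in> topspace X \<Longrightarrow> U n x \<le> H x"
  shows "\<exists>V :: nat \<Rightarrow> 'a \<Rightarrow> real. (\<forall>n. continuous_map X euclideanreal (V n)) \<and>
     (\<forall>x\<in>topspace X. \<forall>n. U 0 x \<le> V n x \<and> V n x \<le> H x) \<and>
     (\<forall>x\<in>topspace X. \<exists>N. \<forall>n\<ge>N. V n x = U 0 x) \<and>
     (\<forall>x\<in>topspace X. \<exists>n. V n x = H x)"
proof -
  define p where "p = rec_nat (U 0) (\<lambda>n q x. max (q x) (U (Suc n) x))"
  have p0: "p 0 = U 0" by (simp add: p_def)
  have pS: "p (Suc n) = (\<lambda>x. max (p n x) (U (Suc n) x))" for n by (simp add: p_def)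
  have pc: "continuous_map X euclideanreal (p n)" for n
    by (induct n) (simp_all add: p0 pS cont continuous_map_real_max)
  have pstep: "p n x \<le> p (Suc n) x" for n x by (simp add: pS)
  have pmono: "m \<le> n \<Longrightarrow> p m x \<le> p n x" for m n x
    using lift_Suc_mono_le[of "\<lambda>n. p n x"] pstep by blast
  have pU: "U j x \<le> p j x" for j x
    by (cases j) (simp_all add: p0 pS)
  have pge: "U 0 x \<le> p n x" for n x using pmono[of 0 n x] by (simp add: p0)
  have ple: "x \<in> topspace X \<Longrightarrow> p n x \<le> H x" for n x
    by (induct n) (simp_all add: p0 pS le)
  have Hb: "x \<in> topspace X \<Longrightarrow> \<bar>H x\<bar> \<le> 1" for x using att bnd by metis
  have pabs: "x \<in> topspace X \<Longrightarrow> \<bar>p n x\<bar> \<le> 1" for n x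
    using pge[of x n] ple[of x n] bnd[of x 0] Hb[of x] by auto
  define gn where "gn j x = p j x - p (j - 1) x" for j x
  have gn_nonneg: "0 \<le> gn j x" for j x
    unfolding gn_def by (cases j) (simp_all add: pstep)
  define B where "B n x = (\<Sum>j\<le>n. psi (real (n - j) * gn j x))" for n x
  define V where "V n x = min (p n x) (U 0 x + B n x)" for n x
  have Bnn: "0 \<le> B n x" for n x unfolding B_def by (intro sum_nonneg psi_nonneg)
  have gc: "continuous_map X euclideanreal (gn j)" for j
    unfolding gn_def[abs_def] by (intro continuous_map_diff pc)
  have Bc: "continuous_map X euclideanreal (B n)" for n
    unfolding B_def[abs_def]
    by (intro continuous_map_sum psi_cont continuous_map_real_mult_left gc) auto
  have Vc: "continuous_map X euclideanreal (V n)" for n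
    unfolding V_def[abs_def] by (intro continuous_map_real_min continuous_map_add pc cont Bc)
  have Vb: "\<forall>x\<in>topspace X. \<forall>n. U 0 x \<le> V n x \<and> V n x \<le> H x"
  proof (intro ballI allI)
    fix x n assume x: "x \<in> topspace X"
    have "U 0 x \<le> p n x" "p n x \<le> H x" "0 \<le> B n x" using pge ple[OF x] Bnn by auto
    then show "U 0 x \<le> V n x \<and> V n x \<le> H x" unfolding V_def by linarith
  qed
  have pH: "x \<in> topspace X \<Longrightarrow> p k x = H x \<Longrightarrow> k \<le> n \<Longrightarrow> p n x = H x" for x k n
    using pmono[of k n x] ple[of x n] by auto
  have ev: "\<exists>N. \<forall>n\<ge>N. V n x = U 0 x" if x: "x \<in> topspace X" for x
  proof -
    obtain k where k: "U k x = H x" using att x by blast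
    have pk: "p k x = H x" using pU[of k x] ple[OF x, of k] k by auto
    have gz: "gn j x = 0" if "k < j" for j
      using pH[OF x pk, of j] pH[OF x pk, of "j - 1"] that unfolding gn_def by auto
    define M where "M = k + (\<Sum>j\<le>k. nat \<lceil>4 / gn j x\<rceil>)"
    have "V n x = U 0 x" if n: "n \<ge> M" for n
    proof -
      have "psi (real (n - j) * gn j x) = 0" if j: "j \<le> n" for j
      proof (cases "k < j")
        case True then show ?thesis using gz psi_zero by simp
      next
        case False
        show ?thesis
        proof (cases "gn j x = 0")
          case True then show ?thesis using psi_zero by simp
        next
          case g: False
          then have gpos: "0 < gn j x" using gn_nonneg[of j x] by linarith
          have "nat \<lceil>4 / gn j x\<rceil> \<le> (\<Sum>j\<le>k. nat \<lceil>4 / gn j x\<rceil>)"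
            by (rule member_le_sum) (use False in auto)
          then have "nat \<lceil>4 / gn j x\<rceil> \<le> n - j" using n False unfolding M_def by linarith
          then have "4 / gn j x \<le> real (n - j)"
            by (meson of_nat_le_iff order_trans real_nat_ceiling_ge)
          then have "4 \<le> real (n - j) * gn j x" using gpos by (metis pos_divide_le_eq)
          then show ?thesis by (rule psi_big)
        qed
      qed
      then have "B n x = 0" unfolding B_def by simp
      then show ?thesis unfolding V_def using pge[of x n] by simp
    qed
    then show ?thesis by blast
  qed
  have at: "\<exists>n. V n x = H x" if x: "x \<in> topspace X" for x
  proof (cases "H x = U 0 x")
    case True
    then have "V 0 x = H x" unfolding V_def using p0 Bnn[of 0 x] by simp
    then show ?thesis by blast
  next
    case ne: False
    obtain k where k: "U k x = H x" using att x by blast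
    have pk: "p k x = H x" using pU[of k x] ple[OF x, of k] k by auto
    define N where "N = (LEAST n. p n x = H x)"
    have pN: "p N x = H x" unfolding N_def by (rule LeastI[of _ k]) (rule pk)
    have N0: "N \<noteq> 0" proof assume "N = 0" then show False using pN ne p0 by simp qed
    have "p (N - 1) x \<noteq> H x"
    proof
      assume "p (N - 1) x = H x"
      then have "N \<le> N - 1" unfolding N_def by (rule Least_le)
      then show False using N0 by simp
    qed
    then have pN1: "p (N - 1) x < H x" using ple[OF x, of "N - 1"] by simp
    define \<gamma> where "\<gamma> = gn N x"
    have gam: "\<gamma> = H x - p (N - 1) x" unfolding \<gamma>_def gn_def using pN by simp
    have gpos: "0 < \<gamma>" using gam pN1 by simp
    have gle: "\<gamma> \<le> 2" using gam pabs[OF x, of "N - 1"] Hb[OF x] by auto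
    define d where "d = nat \<lceil>1 / \<gamma>\<rceil>"
    have d1: "1 / \<gamma> \<le> real d" unfolding d_def by (rule real_nat_ceiling_ge)
    have "real d = real_of_int \<lceil>1 / \<gamma>\<rceil>" unfolding d_def using gpos by simp
    then have d2: "real d < 1 / \<gamma> + 1" by linarith
    have lo: "1 \<le> real d * \<gamma>" using d1 gpos by (simp add: divide_simps)
    have "real d * \<gamma> < (1 / \<gamma> + 1) * \<gamma>" using d2 gpos by (rule mult_strict_right_mono)
    moreover have "(1 / \<gamma> + 1) * \<gamma> = 1 + \<gamma>" using gpos by (simp add: field_simps)
    ultimately have hi: "real d * \<gamma> \<le> 3" using gle by linarith
    define n where "n = N + d"
    have "psi (real (n - N) * gn N x) = 2"
      using lo hi unfolding n_def \<gamma>_def by (simp add: psi_mid)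
    moreover have "psi (real (n - N) * gn N x) \<le> B n x"
      unfolding B_def by (rule member_le_sum) (auto simp: n_def psi_nonneg)
    ultimately have B2: "2 \<le> B n x" by simp
    have "p n x = H x" using pH[OF x pN, of n] by (simp add: n_def)
    then have "V n x = H x" unfolding V_def using B2 bnd[OF x, of 0] Hb[OF x] by auto
    then show ?thesis by blast
  qed
  have "(\<forall>n. continuous_map X euclideanreal (V n)) \<and>
     (\<forall>x\<in>topspace X. \<forall>n. U 0 x \<le> V n x \<and> V n x \<le> H x) \<and>
     (\<forall>x\<in>topspace X. \<exists>N. \<forall>n\<ge>N. V n x = U 0 x) \<and>
     (\<forall>x\<in>topspace X. \<exists>n. V n x = H x)"
    using Vc Vb ev at by blast
  then show ?thesis by (rule exI[where x=V])
qed


lemma split_inf: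
  assumes hs: "Hausdorff_space Y" and t1: "t1_space Y" and V: "openin Y V" and inf: "infinite V"
  shows "\<exists>W Q. openin Y W \<and> openin Y Q \<and> W \<subseteq> V \<and> Q \<subseteq> V \<and> W \<inter> Q = {} \<and> infinite W \<and> Q \<noteq> {}"
proof -
  have Vt: "V \<subseteq> topspace Y" using V by (rule openin_subset)
  obtain a where a: "a \<in> V" using inf by (metis ex_in_conv finite.emptyI)
  have "infinite (V - {a})" using inf by simp
  then obtain b where b: "b \<in> V - {a}" by (metis ex_in_conv finite.emptyI)
  then have "a \<in> topspace Y" "b \<in> topspace Y" "a \<noteq> b" using a Vt by auto
  then obtain A B where AB: "openin Y A" "openin Y B" "a \<in> A" "b \<in> B" "disjnt A B"
    using hs unfolding Hausdorff_space_def by blast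
  show ?thesis
  proof (cases "infinite (A \<inter> V)")
    case True
    show ?thesis
      by (rule exI[where x="A \<inter> V"], rule exI[where x="B \<inter> V"])
         (use True AB V b in \<open>auto simp: disjnt_def\<close>)
  next
    case False
    have cl: "closedin Y (A \<inter> V)" using False t1 Vt unfolding t1_space_closedin_finite by auto
    have inf2: "infinite (V - A \<inter> V)" using Diff_infinite_finite[OF _ inf] False by blast
    show ?thesis
      by (rule exI[where x="V - A \<inter> V"], rule exI[where x="A \<inter> V"])
         (use inf2 cl AB V a in \<open>auto intro: openin_diff\<close>)
  qed
qed

lemma bumps:
  fixes Y :: "'b topology"
  assumes cr: "completely_regular_space Y" and t1: "t1_space Y" and inf: "infinite (topspace Y)"
  shows "\<exists>(y :: nat \<Rightarrow> 'b) (\<phi> :: nat \<Rightarrow> 'b \<Rightarrow> real). (\<forall>n. y n \<in> topspace Y) \<and>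
     (\<forall>n. continuous_map Y euclideanreal (\<phi> n)) \<and>
     (\<forall>n z. z \<in> topspace Y \<longrightarrow> 0 \<le> \<phi> n z \<and> \<phi> n z \<le> 1) \<and>
     (\<forall>n. \<phi> n (y n) = 1) \<and>
     (\<forall>n m z. z \<in> topspace Y \<longrightarrow> n \<noteq> m \<longrightarrow> \<phi> n z = 0 \<or> \<phi> m z = 0)"
proof -
  have hs: "Hausdorff_space Y"
    using regular_t1_imp_Hausdorff_space completely_regular_imp_regular_space cr t1 by blast
  define P where "P V W Q \<longleftrightarrow> openin Y W \<and> openin Y Q \<and> W \<subseteq> V \<and> Q \<subseteq> V \<and> W \<inter> Q = {} \<and> infinite W \<and> Q \<noteq> {}"
    for V W Q :: "'b set"
  define stp where "stp V = (SOME WO. P V (fst WO) (snd WO))" for V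
  have stpP: "P V (fst (stp V)) (snd (stp V))" if VV: "openin Y V" "infinite V" for V
  proof -
    obtain W Q where "P V W Q" using split_inf[OF hs t1 VV] unfolding P_def by blast
    then have "P V (fst (W, Q)) (snd (W, Q))" by simp
    then show ?thesis unfolding stp_def by (rule someI[where P="\<lambda>WO. P V (fst WO) (snd WO)"])
  qed
  define Vs where "Vs = rec_nat (topspace Y) (\<lambda>n V. fst (stp V))"
  have Vs0: "Vs 0 = topspace Y" by (simp add: Vs_def)
  have VsS: "Vs (Suc n) = fst (stp (Vs n))" for n by (simp add: Vs_def)
  have inv: "openin Y (Vs n) \<and> infinite (Vs n)" for n
  proof (induct n)
    case 0 then show ?case using inf by (simp add: Vs0)
  next
    case (Suc n) then show ?case using stpP[of "Vs n"] by (simp add: VsS P_def)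
  qed
  define Os where "Os n = snd (stp (Vs n))" for n
  have PP: "P (Vs n) (Vs (Suc n)) (Os n)" for n using stpP[of "Vs n"] inv[of n] by (simp add: VsS Os_def)
  have dec: "decseq Vs" by (rule decseq_SucI) (use PP in \<open>auto simp: P_def\<close>)
  have disj: "Os n \<inter> Os m = {}" if "n < m" for n m
  proof -
    have "Os m \<subseteq> Vs m" using PP[of m] by (simp add: P_def)
    also have "Vs m \<subseteq> Vs (Suc n)" using dec that by (simp add: decseqD)
    finally show ?thesis using PP[of n] by (auto simp: P_def)
  qed
  have Oo: "openin Y (Os n)" and One: "Os n \<noteq> {}" for n using PP[of n] by (auto simp: P_def)
  have Ot: "Os n \<subseteq> topspace Y" for n using Oo[of n] by (rule openin_subset)
  define y where "y n = (SOME z. z \<in> Os n)" for n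
  have yin: "y n \<in> Os n" for n unfolding y_def using One[of n] by (simp add: some_in_eq)
  have cr': "\<exists>f::'b\<Rightarrow>real. continuous_map Y (top_of_set {0..1}) f \<and> f x = 0 \<and> f ` S \<subseteq> {1}"
    if "closedin Y S" "x \<in> topspace Y - S" for S x
  proof -
    have "\<forall>S x. closedin Y S \<and> x \<in> topspace Y - S \<longrightarrow> (\<exists>f::'b\<Rightarrow>real. continuous_map Y (top_of_set {0..1}) f \<and> f x = 0 \<and> f ` S \<subseteq> {1})"
      using cr by (simp only: completely_regular_space_def)
    then show ?thesis using that by simp
  qed
  have ex: "\<forall>n. \<exists>f::'b\<Rightarrow>real. continuous_map Y (top_of_set {0..1}) f \<and> f (y n) = 0 \<and> f ` (topspace Y - Os n) \<subseteq> {1}"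
  proof
    fix n
    have "closedin Y (topspace Y - Os n)" using Oo[of n] by auto
    moreover have "y n \<in> topspace Y - (topspace Y - Os n)" using yin[of n] Ot[of n] by auto
    ultimately show "\<exists>f::'b\<Rightarrow>real. continuous_map Y (top_of_set {0..1}) f \<and> f (y n) = 0 \<and> f ` (topspace Y - Os n) \<subseteq> {1}"
      by (rule cr')
  qed
  obtain fs :: "nat \<Rightarrow> 'b \<Rightarrow> real" where fs0: "\<forall>n. continuous_map Y (top_of_set {0..1}) (fs n) \<and> fs n (y n) = 0 \<and> fs n ` (topspace Y - Os n) \<subseteq> {1}"
    using choice[OF ex] by (elim exE) (rule that)
  have fs: "continuous_map Y (top_of_set {0..1}) (fs n) \<and> fs n (y n) = 0 \<and> fs n ` (topspace Y - Os n) \<subseteq> {1}" for n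
    using fs0 by (rule spec)
  define \<phi> where "\<phi> n z = 1 - fs n z" for n z
  have fc: "continuous_map Y euclideanreal (fs n)" and fr: "fs n \<in> topspace Y \<rightarrow> {0..1}" for n
    using fs[of n] unfolding continuous_map_in_subtopology by auto
  have c1: "\<forall>n. continuous_map Y euclideanreal (\<phi> n)"
    unfolding \<phi>_def[abs_def] using fc by (auto intro: continuous_map_diff)
  have c2: "\<forall>n z. z \<in> topspace Y \<longrightarrow> 0 \<le> \<phi> n z \<and> \<phi> n z \<le> 1"
    using fr unfolding \<phi>_def by (auto simp: Pi_iff)
  have c3: "\<forall>n. \<phi> n (y n) = 1" using fs unfolding \<phi>_def by simp
  have zero: "\<phi> n z = 0" if "z \<in> topspace Y" "z \<notin> Os n" for n z
    using fs[of n] that unfolding \<phi>_def by auto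
  have c4: "\<forall>n m z. z \<in> topspace Y \<longrightarrow> n \<noteq> m \<longrightarrow> \<phi> n z = 0 \<or> \<phi> m z = 0"
  proof (intro allI impI)
    fix n m :: nat and z assume z: "z \<in> topspace Y" and nm: "n \<noteq> m"
    have "z \<notin> Os n \<or> z \<notin> Os m"
    proof (cases "n < m")
      case True then show ?thesis using disj by blast
    next
      case False then have "m < n" using nm by simp
      then show ?thesis using disj by blast
    qed
    then show "\<phi> n z = 0 \<or> \<phi> m z = 0" using zero z by blast
  qed
  have c0: "\<forall>n. y n \<in> topspace Y" using yin Ot by blast
  show ?thesis
    by (rule exI[where x=y], rule exI[where x=\<phi>]) (intro conjI c0 c1 c2 c3 c4)
qed


lemma convex_between:
  fixes G a b t :: real
  assumes "G \<le> a" "G \<le> b" "0 \<le> t" "t \<le> 1"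
  shows "G \<le> a + t * (b - a)"
proof (cases "a \<le> b")
  case True
  then have "0 \<le> t * (b - a)" using assms by simp
  then show ?thesis using assms by linarith
next
  case False
  then have "b - a \<le> t * (b - a)" using assms mult_right_mono_neg[of t 1 "b - a"] by simp
  then show ?thesis using assms by linarith
qed

lemma convex_between2:
  fixes H a b t :: real
  assumes "a \<le> H" "b \<le> H" "0 \<le> t" "t \<le> 1"
  shows "a + t * (b - a) \<le> H"
  using convex_between[of "-H" "-a" "-b" t] assms by (simp add: algebra_simps)

lemma real_main:
  fixes U :: "nat \<Rightarrow> 'a \<Rightarrow> real" and G H :: "'a \<Rightarrow> real" and Y :: "'b topology"
  assumes cont: "\<And>n. continuous_map X euclideanreal (U n)"
    and bnd: "\<And>n x. x \<in> topspace X \<Longrightarrow> \<bar>U n x\<bar> \<le> 1"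
    and attH: "\<And>x. x \<in> topspace X \<Longrightarrow> \<exists>k. U k x = H x"
    and leH: "\<And>n x. x \<in> topspace X \<Longrightarrow> U n x \<le> H x"
    and attG: "\<And>x. x \<in> topspace X \<Longrightarrow> \<exists>k. U k x = G x"
    and geG: "\<And>n x. x \<in> topspace X \<Longrightarrow> G x \<le> U n x"
    and cr: "completely_regular_space Y" and t1: "t1_space Y" and inf: "infinite (topspace Y)"
  shows "\<exists>F :: 'a \<Rightarrow> 'b \<Rightarrow> real. (\<forall>x\<in>topspace X. continuous_map Y euclideanreal (F x)) \<and>
     (\<forall>y\<in>topspace Y. continuous_map X euclideanreal (\<lambda>x. F x y)) \<and>
     (\<forall>x\<in>topspace X. (\<exists>y\<in>topspace Y. F x y = G x) \<and> (\<forall>y\<in>topspace Y. G x \<le> F x y \<and> F x y \<le> H x) \<and>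
        (\<exists>y\<in>topspace Y. F x y = H x))"
proof -
  obtain V :: "nat \<Rightarrow> 'a \<Rightarrow> real" where Vc: "\<forall>n. continuous_map X euclideanreal (V n)"
    and Vb: "\<forall>x\<in>topspace X. \<forall>n. U 0 x \<le> V n x \<and> V n x \<le> H x"
    and Vev: "\<forall>x\<in>topspace X. \<exists>N. \<forall>n\<ge>N. V n x = U 0 x"
    and Vat: "\<forall>x\<in>topspace X. \<exists>n. V n x = H x"
    using max_side[of X U H, OF cont bnd attH leH] by blast
  obtain V' :: "nat \<Rightarrow> 'a \<Rightarrow> real" where V'c: "\<forall>n. continuous_map X euclideanreal (V' n)"
    and V'b: "\<forall>x\<in>topspace X. \<forall>n. - U 0 x \<le> V' n x \<and> V' n x \<le> - G x"
    and V'ev: "\<forall>x\<in>topspace X. \<exists>N. \<forall>n\<ge>N. V' n x = - U 0 x"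
    and V'at: "\<forall>x\<in>topspace X. \<exists>n. V' n x = - G x"
  proof -
    have c: "continuous_map X euclideanreal (\<lambda>x. - U n x)" for n using cont[of n] by simp
    have b: "x \<in> topspace X \<Longrightarrow> \<bar>- U n x\<bar> \<le> 1" for n x using bnd by simp
    have a: "x \<in> topspace X \<Longrightarrow> \<exists>k. - U k x = - G x" for x using attG by (metis)
    have l: "x \<in> topspace X \<Longrightarrow> - U n x \<le> - G x" for n x using geG by simp
    show ?thesis using max_side[of X "\<lambda>n x. - U n x" "\<lambda>x. - G x", OF c b a l] that by blast
  qed
  define W where "W n x = - V' n x" for n x
  have Wc: "continuous_map X euclideanreal (W n)" for n
    unfolding W_def[abs_def] using V'c by (simp add: continuous_map_minus)
  have Wb: "G x \<le> W n x \<and> W n x \<le> U 0 x" if x: "x \<in> topspace X" for x n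
  proof -
    have "- U 0 x \<le> V' n x \<and> V' n x \<le> - G x" using V'b x by blast
    then show ?thesis unfolding W_def by linarith
  qed
  have Wev: "\<exists>N. \<forall>n\<ge>N. W n x = U 0 x" if x: "x \<in> topspace X" for x
  proof -
    obtain N where "\<forall>n\<ge>N. V' n x = - U 0 x" using V'ev x by blast
    then have "\<forall>n\<ge>N. W n x = U 0 x" unfolding W_def by simp
    then show ?thesis by blast
  qed
  have Wat: "\<exists>n. W n x = G x" if x: "x \<in> topspace X" for x
  proof -
    obtain n where "V' n x = - G x" using V'at x by blast
    then have "W n x = G x" unfolding W_def by simp
    then show ?thesis by blast
  qed
  define Z where "Z n = (if even n then V (n div 2) else W (n div 2))" for n
  have Zc: "continuous_map X euclideanreal (Z n)" for n
    unfolding Z_def using Vc Wc by simp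
  have G0: "x \<in> topspace X \<Longrightarrow> G x \<le> U 0 x" for x using geG by blast
  have H0: "x \<in> topspace X \<Longrightarrow> U 0 x \<le> H x" for x using leH by blast
  have Zb: "x \<in> topspace X \<Longrightarrow> G x \<le> Z n x \<and> Z n x \<le> H x" for x n
    unfolding Z_def using Vb Wb[of x "n div 2"] G0[of x] H0[of x] by (auto intro: order_trans)
  have Zev: "\<exists>N. \<forall>n\<ge>N. Z n x = U 0 x" if x: "x \<in> topspace X" for x
  proof -
    obtain N1 where N1: "\<forall>n\<ge>N1. V n x = U 0 x" using Vev x by blast
    obtain N2 where N2: "\<forall>n\<ge>N2. W n x = U 0 x" using Wev x by blast
    have "Z n x = U 0 x" if "n \<ge> 2 * (N1 + N2)" for n
    proof -
      have "N1 + N2 \<le> n div 2" using div_le_mono[OF that, of 2] by simp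
      then have "n div 2 \<ge> N1" "n div 2 \<ge> N2" by linarith+
      then show ?thesis unfolding Z_def using N1 N2 by simp
    qed
    then show ?thesis by blast
  qed
  have ZH: "\<exists>n. Z n x = H x" if x: "x \<in> topspace X" for x
  proof -
    obtain m where "V m x = H x" using Vat x by blast
    then have "Z (2 * m) x = H x" unfolding Z_def by simp
    then show ?thesis by blast
  qed
  have ZG: "\<exists>n. Z n x = G x" if x: "x \<in> topspace X" for x
  proof -
    obtain m where "W m x = G x" using Wat x by blast
    then have "Z (2 * m + 1) x = G x" unfolding Z_def by simp
    then show ?thesis by blast
  qed
  obtain y :: "nat \<Rightarrow> 'b" and \<phi> :: "nat \<Rightarrow> 'b \<Rightarrow> real" where
    y: "\<forall>n. y n \<in> topspace Y" and \<phi>c: "\<forall>n. continuous_map Y euclideanreal (\<phi> n)"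
    and \<phi>b: "\<forall>n z. z \<in> topspace Y \<longrightarrow> 0 \<le> \<phi> n z \<and> \<phi> n z \<le> 1"
    and \<phi>1: "\<forall>n. \<phi> n (y n) = 1"
    and \<phi>d: "\<forall>n m z. z \<in> topspace Y \<longrightarrow> n \<noteq> m \<longrightarrow> \<phi> n z = 0 \<or> \<phi> m z = 0"
    using bumps[OF cr t1 inf] by blast
  define F where "F x z = U 0 x + (\<Sum>n. \<phi> n z * (Z n x - U 0 x))" for x z
  have FA: "\<exists>N. F x = (\<lambda>z. U 0 x + (\<Sum>n<N. \<phi> n z * (Z n x - U 0 x)))" if x: "x \<in> topspace X" for x
  proof -
    obtain N where N: "\<forall>n\<ge>N. Z n x = U 0 x" using Zev[OF x] by blast
    have "(\<Sum>n. \<phi> n z * (Z n x - U 0 x)) = (\<Sum>n<N. \<phi> n z * (Z n x - U 0 x))" for z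
      by (rule suminf_finite) (use N in auto)
    then show ?thesis unfolding F_def by auto
  qed
  have FB: "F x z = U 0 x + \<phi> n z * (Z n x - U 0 x)" if z: "z \<in> topspace Y" and nz: "\<phi> n z \<noteq> 0" for x z n
  proof -
    have "(\<Sum>m. \<phi> m z * (Z m x - U 0 x)) = (\<Sum>m\<in>{n}. \<phi> m z * (Z m x - U 0 x))"
      by (rule suminf_finite) (use \<phi>d z nz in auto)
    then show ?thesis unfolding F_def by simp
  qed
  have FC: "F x z = U 0 x" if z: "z \<in> topspace Y" and nz: "\<forall>n. \<phi> n z = 0" for x z
    unfolding F_def using nz by simp
  have cy: "\<forall>x\<in>topspace X. continuous_map Y euclideanreal (F x)"
  proof
    fix x assume x: "x \<in> topspace X"
    obtain N where N: "F x = (\<lambda>z. U 0 x + (\<Sum>n<N. \<phi> n z * (Z n x - U 0 x)))" using FA[OF x] by blast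
    show "continuous_map Y euclideanreal (F x)"
      unfolding N using \<phi>c
      by (intro continuous_map_add continuous_map_const[THEN iffD2] continuous_map_sum continuous_map_real_mult) auto
  qed
  have cx: "\<forall>z\<in>topspace Y. continuous_map X euclideanreal (\<lambda>x. F x z)"
  proof
    fix z assume z: "z \<in> topspace Y"
    show "continuous_map X euclideanreal (\<lambda>x. F x z)"
    proof (cases "\<exists>n. \<phi> n z \<noteq> 0")
      case True
      then obtain n where n: "\<phi> n z \<noteq> 0" by blast
      have "(\<lambda>x. F x z) = (\<lambda>x. U 0 x + \<phi> n z * (Z n x - U 0 x))" using FB[OF z n] by auto
      then show ?thesis using cont Zc
        by (simp add: continuous_map_add continuous_map_real_mult_left continuous_map_diff)
    next
      case False
      then have "(\<lambda>x. F x z) = U 0" using FC[OF z] by auto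
      then show ?thesis using cont by simp
    qed
  qed
  have bnds: "G x \<le> F x z \<and> F x z \<le> H x" if x: "x \<in> topspace X" and z: "z \<in> topspace Y" for x z
  proof (cases "\<exists>n. \<phi> n z \<noteq> 0")
    case True
    then obtain n where n: "\<phi> n z \<noteq> 0" by blast
    have t: "0 \<le> \<phi> n z" "\<phi> n z \<le> 1" using \<phi>b z by auto
    show ?thesis unfolding FB[OF z n]
      using convex_between[OF G0[OF x] _ t] convex_between2[OF H0[OF x] _ t] Zb[OF x, of n] by auto
  next
    case False
    then show ?thesis using FC[OF z] G0[OF x] H0[OF x] by auto
  qed
  have Fy: "F x (y n) = Z n x" for x n
  proof -
    have nz: "\<phi> n (y n) \<noteq> 0" using \<phi>1 by simp
    have yy: "y n \<in> topspace Y" using y by blast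
    show ?thesis using FB[OF yy nz, of x] \<phi>1 by simp
  qed
  have att: "\<forall>x\<in>topspace X. (\<exists>z\<in>topspace Y. F x z = G x) \<and> (\<forall>z\<in>topspace Y. G x \<le> F x z \<and> F x z \<le> H x) \<and>
        (\<exists>z\<in>topspace Y. F x z = H x)"
  proof
    fix x assume x: "x \<in> topspace X"
    obtain a where a: "Z a x = G x" using ZG[OF x] by blast
    obtain b where b: "Z b x = H x" using ZH[OF x] by blast
    show "(\<exists>z\<in>topspace Y. F x z = G x) \<and> (\<forall>z\<in>topspace Y. G x \<le> F x z \<and> F x z \<le> H x) \<and>
        (\<exists>z\<in>topspace Y. F x z = H x)"
      using bnds[OF x] Fy[of x a] Fy[of x b] a b y by metis
  qed
  have "(\<forall>x\<in>topspace X. continuous_map Y euclideanreal (F x)) \<and>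
     (\<forall>y\<in>topspace Y. continuous_map X euclideanreal (\<lambda>x. F x y)) \<and>
     (\<forall>x\<in>topspace X. (\<exists>y\<in>topspace Y. F x y = G x) \<and> (\<forall>y\<in>topspace Y. G x \<le> F x y \<and> F x y \<le> H x) \<and>
        (\<exists>y\<in>topspace Y. F x y = H x))" using cy cx att by blast
  then show ?thesis by (rule exI[where x=F])
qed

theorem theorem8p1:
  fixes X :: "'a topology" and Y :: "'b topology" and g h :: "'a \<Rightarrow> ereal"
  assumes "completely_regular_space Y" and "t1_space Y"
    and "infinite (topspace Y)"
    and "stable_Hahn_pair X g h"
  shows "\<exists>f :: 'a \<Rightarrow> 'b \<Rightarrow> ereal. separately_continuous X Y f \<and>
           (\<forall>x\<in>topspace X.
              (\<exists>y\<in>topspace Y. f x y = g x) \<and> (\<forall>y\<in>topspace Y. g x \<le> f x y) \<and>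
              (\<exists>y\<in>topspace Y. f x y = h x) \<and> (\<forall>y\<in>topspace Y. f x y \<le> h x))"
proof -
  obtain Tx where hm: "homeomorphism {-1..1::real} (UNIV::ereal set) Sx Tx" using Tx_exists by blast
  have Tc: "continuous_map euclidean euclideanreal Tx"
    using homeomorphism_cont2[OF hm] by simp
  have Sc: "continuous_map euclideanreal euclidean Sx" using Sx_cont by simp
  have Tr: "Tx e \<in> {-1..1}" for e using homeomorphism_image2[OF hm] by blast
  have ST: "Sx (Tx e) = e" for e using homeomorphism_apply2[OF hm] by blast
  have Tmono: "Tx a \<le> Tx b" if ab: "a \<le> b" for a b
  proof (rule ccontr)
    assume "\<not> Tx a \<le> Tx b"
    then have "Sx (Tx b) \<le> Sx (Tx a)" by (intro Sx_mono) simp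
    then have "b \<le> a" by (simp add: ST)
    then have "a = b" using ab by simp
    then show False using \<open>\<not> Tx a \<le> Tx b\<close> by simp
  qed
  obtain u :: "nat \<Rightarrow> 'a \<Rightarrow> ereal" where uc: "\<forall>n. continuous_map X euclidean (u n)"
    and ug: "\<forall>x\<in>topspace X. (\<exists>n. u n x = g x) \<and> (\<forall>n. g x \<le> u n x)"
    and uh: "\<forall>x\<in>topspace X. (\<exists>n. u n x = h x) \<and> (\<forall>n. u n x \<le> h x)"
    using assms(4) unfolding stable_Hahn_pair_def by blast
  define U where "U n x = Tx (u n x)" for n x
  define G where "G x = Tx (g x)" for x
  define H where "H x = Tx (h x)" for x
  have Uc: "continuous_map X euclideanreal (U n)" for n
  proof -
    have "continuous_map X euclideanreal (Tx \<circ> u n)"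
      using continuous_map_compose[OF _ Tc] uc by blast
    then show ?thesis by (simp add: U_def[abs_def] comp_def)
  qed
  have Ub: "\<bar>U n x\<bar> \<le> 1" for n x using Tr[of "u n x"] unfolding U_def by auto
  have aH: "\<exists>k. U k x = H x" if "x \<in> topspace X" for x
    using uh that unfolding U_def H_def by metis
  have lH: "U n x \<le> H x" if "x \<in> topspace X" for n x
    using uh that unfolding U_def H_def by (simp add: Tmono)
  have aG: "\<exists>k. U k x = G x" if "x \<in> topspace X" for x
    using ug that unfolding U_def G_def by metis
  have lG: "G x \<le> U n x" if "x \<in> topspace X" for n x
    using ug that unfolding U_def G_def by (simp add: Tmono)
  obtain F :: "'a \<Rightarrow> 'b \<Rightarrow> real" where
    Fy: "\<forall>x\<in>topspace X. continuous_map Y euclideanreal (F x)"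
    and Fx: "\<forall>y\<in>topspace Y. continuous_map X euclideanreal (\<lambda>x. F x y)"
    and Fa: "\<forall>x\<in>topspace X. (\<exists>y\<in>topspace Y. F x y = G x) \<and> (\<forall>y\<in>topspace Y. G x \<le> F x y \<and> F x y \<le> H x) \<and>
        (\<exists>y\<in>topspace Y. F x y = H x)"
    using real_main[of X U H G Y, OF Uc Ub aH lH aG lG assms(1,2,3)] by blast
  define f where "f x y = Sx (F x y)" for x y
  have sc: "separately_continuous X Y f"
    unfolding separately_continuous_def
  proof (intro conjI ballI)
    fix x assume "x \<in> topspace X"
    then have "continuous_map Y euclidean (Sx \<circ> F x)"
      using continuous_map_compose[OF _ Sc] Fy by blast
    then show "continuous_map Y euclidean (\<lambda>y. f x y)" by (simp add: f_def comp_def)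
  next
    fix y assume "y \<in> topspace Y"
    then have "continuous_map X euclidean (Sx \<circ> (\<lambda>x. F x y))"
      using continuous_map_compose[OF _ Sc] Fx by blast
    then show "continuous_map X euclidean (\<lambda>x. f x y)" by (simp add: f_def comp_def)
  qed
  have SG: "Sx (G x) = g x" "Sx (H x) = h x" for x by (simp_all add: G_def H_def ST)
  have props: "\<forall>x\<in>topspace X.
              (\<exists>y\<in>topspace Y. f x y = g x) \<and> (\<forall>y\<in>topspace Y. g x \<le> f x y) \<and>
              (\<exists>y\<in>topspace Y. f x y = h x) \<and> (\<forall>y\<in>topspace Y. f x y \<le> h x)"
  proof
    fix x assume x: "x \<in> topspace X"
    obtain y1 where y1: "y1 \<in> topspace Y" "F x y1 = G x" using Fa x by blast
    obtain y2 where y2: "y2 \<in> topspace Y" "F x y2 = H x" using Fa x by blast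
    have b: "g x \<le> f x y \<and> f x y \<le> h x" if "y \<in> topspace Y" for y
    proof -
      have "G x \<le> F x y" "F x y \<le> H x" using Fa x that by auto
      then show ?thesis unfolding f_def using Sx_mono SG by metis
    qed
    have "f x y1 = g x" "f x y2 = h x" using y1 y2 SG unfolding f_def by auto
    then show "(\<exists>y\<in>topspace Y. f x y = g x) \<and> (\<forall>y\<in>topspace Y. g x \<le> f x y) \<and>
              (\<exists>y\<in>topspace Y. f x y = h x) \<and> (\<forall>y\<in>topspace Y. f x y \<le> h x)"
      using b y1(1) y2(1) by blast
  qed
  show ?thesis using sc props by blast
qed

end
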